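(* Let $R_1,R_2$ be non-negatively graded commutative rings with unity, $\psi\colon R_1\to R_2$ a homomorphism, and for $i=1,2$ let $M_i$ be a non-negatively graded $R_i$-algebra. Assume that (1) $M_1$ is a free $R_1$-module, (2) $M_2\cong R_2\otimes_{R_1}M_1$, with $\psi^*\colon M_1\to M_2$ the induced map $m\mapsto 1\otimes m$, and (3) $\psi$ induces an isomorphism $R_1/R_1^+\cong R_2/R_2^+$ of $R_1$-modules, where $R_i^+$ denotes the submodule of elements of positive degree. Let $\{g_\lambda\}_{\lambda\in\Lambda}$ be $R_2$-algebra generators of $M_2$. Then any elements $\tilde g_\lambda\in M_1$ with $\psi^*(\tilde g_\lambda)=g_\lambda$ for all $\lambda$ form a set of $R_1$-algebra generators of $M_1$. *)

theory Defs
  imports Main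
begin

definition graded :: "(nat \<Rightarrow> 'a::ring_1 set) \<Rightarrow> bool" where
  "graded G \<longleftrightarrow>
     (\<forall>n. 0 \<in> G n \<and> (\<forall>x\<in>G n. \<forall>y\<in>G n. x + y \<in> G n \<and> - x \<in> G n)) \<and>
     1 \<in> G 0 \<and>
     (\<forall>i j. \<forall>x\<in>G i. \<forall>y\<in>G j. x * y \<in> G (i + j)) \<and>
     (\<forall>x. \<exists>f N. (\<forall>n. f n \<in> G n) \<and> x = (\<Sum>n<N. f n)) \<and>
     (\<forall>f N. (\<forall>n. f n \<in> G n) \<and> (\<Sum>n<N. f n) = 0 \<longrightarrow> (\<forall>n<N. f n = 0))"

definition homogeneous :: "(nat \<Rightarrow> 'a set) \<Rightarrow> 'a \<Rightarrow> bool" where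
  "homogeneous G x \<longleftrightarrow> (\<exists>n. x \<in> G n)"

definition rhom :: "('a::ring_1 \<Rightarrow> 'b::ring_1) \<Rightarrow> bool" where
  "rhom f \<longleftrightarrow> f 1 = 1 \<and> (\<forall>a b. f (a + b) = f a + f b \<and> f (a * b) = f a * f b)"

definition graded_algebra ::
  "(nat \<Rightarrow> 'r::comm_ring_1 set) \<Rightarrow> ('r \<Rightarrow> 'm::ring_1) \<Rightarrow> (nat \<Rightarrow> 'm set) \<Rightarrow> bool" where
  "graded_algebra G \<phi> H \<longleftrightarrow> graded G \<and> graded H \<and> rhom \<phi> \<and>
     (\<forall>r m. \<phi> r * m = m * \<phi> r) \<and> (\<forall>n. \<phi> ` G n \<subseteq> H n)"

text \<open>M is a free R-module (scalar action r.m = phi r * m): it has a basis.\<close>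
definition free_module :: "('r::comm_ring_1 \<Rightarrow> 'm::ring_1) \<Rightarrow> bool" where
  "free_module \<phi> \<longleftrightarrow> (\<exists>B.
     (\<forall>m. \<exists>S c. finite S \<and> S \<subseteq> B \<and> m = (\<Sum>b\<in>S. \<phi> (c b) * b)) \<and>
     (\<forall>S c. finite S \<and> S \<subseteq> B \<and> (\<Sum>b\<in>S. \<phi> (c b) * b) = 0 \<longrightarrow> (\<forall>b\<in>S. c b = 0)))"

definition delta :: "'a \<Rightarrow> 'a \<Rightarrow> int" where
  "delta p q = (if q = p then 1 else 0)"

text \<open>The subgroup of the free abelian group on R2 x M1 (finitely supported
integer-valued functions) generated by the defining relations of the tensor
product R2 (x)_{R1} M1, where R1 acts on R2 via psi and on M1 via phi1.\<close>
inductive_set tensor_zero ::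
  "('r1::comm_ring_1 \<Rightarrow> 'r2::comm_ring_1) \<Rightarrow> ('r1 \<Rightarrow> 'm1::ring_1) \<Rightarrow> ('r2 \<times> 'm1 \<Rightarrow> int) set"
  for \<psi> \<phi>1 where
  zero: "(\<lambda>q. 0) \<in> tensor_zero \<psi> \<phi>1"
| diff: "f \<in> tensor_zero \<psi> \<phi>1 \<Longrightarrow> g \<in> tensor_zero \<psi> \<phi>1 \<Longrightarrow> (\<lambda>q. f q - g q) \<in> tensor_zero \<psi> \<phi>1"
| add_left: "(\<lambda>q. delta (r + r', m) q - delta (r, m) q - delta (r', m) q) \<in> tensor_zero \<psi> \<phi>1"
| add_right: "(\<lambda>q. delta (r, m + m') q - delta (r, m) q - delta (r, m') q) \<in> tensor_zero \<psi> \<phi>1"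
| scalar: "(\<lambda>q. delta (r * \<psi> s, m) q - delta (r, \<phi>1 s * m) q) \<in> tensor_zero \<psi> \<phi>1"

text \<open>psis : M1 \<rightarrow> M2 is a ring homomorphism, R1-linear over psi, and the induced
map R2 (x)_{R1} M1 \<rightarrow> M2, r (x) m \<mapsto> phi2 r * psis m, is bijective
(i.e. M2 \<cong> R2 (x)_{R1} M1 with psis corresponding to m \<mapsto> 1 (x) m).\<close>
definition base_change ::
  "('r1::comm_ring_1 \<Rightarrow> 'r2::comm_ring_1) \<Rightarrow> ('r1 \<Rightarrow> 'm1::ring_1) \<Rightarrow> ('r2 \<Rightarrow> 'm2::ring_1)
   \<Rightarrow> ('m1 \<Rightarrow> 'm2) \<Rightarrow> bool" where
  "base_change \<psi> \<phi>1 \<phi>2 \<psi>s \<longleftrightarrow> rhom \<psi>s \<and>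
     (\<forall>s m. \<psi>s (\<phi>1 s * m) = \<phi>2 (\<psi> s) * \<psi>s m) \<and>
     (\<forall>m2. \<exists>S. finite S \<and> m2 = (\<Sum>p\<in>S. \<phi>2 (fst p) * \<psi>s (snd p))) \<and>
     (\<forall>f. finite {q. f q \<noteq> 0} \<and>
          (\<Sum>q\<in>{q. f q \<noteq> 0}. of_int (f q) * (\<phi>2 (fst q) * \<psi>s (snd q))) = 0
          \<longrightarrow> f \<in> tensor_zero \<psi> \<phi>1)"

definition pos_part :: "(nat \<Rightarrow> 'a::ring_1 set) \<Rightarrow> 'a set" where
  "pos_part G = {x. \<exists>f N. (\<forall>n. f n \<in> G n) \<and> f 0 = 0 \<and> x = (\<Sum>n<N. f n)}"

inductive_set alg_gen :: "('r \<Rightarrow> 'm::ring_1) \<Rightarrow> 'm set \<Rightarrow> 'm set" for \<phi> S where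
  scal: "\<phi> r \<in> alg_gen \<phi> S"
| gen: "x \<in> S \<Longrightarrow> x \<in> alg_gen \<phi> S"
| add: "x \<in> alg_gen \<phi> S \<Longrightarrow> y \<in> alg_gen \<phi> S \<Longrightarrow> x + y \<in> alg_gen \<phi> S"
| mult: "x \<in> alg_gen \<phi> S \<Longrightarrow> y \<in> alg_gen \<phi> S \<Longrightarrow> x * y \<in> alg_gen \<phi> S"

end

theory Submission imports Defs begin

definition hl :: "(nat \<Rightarrow> 'a set) \<Rightarrow> ('a \<times> nat) list \<Rightarrow> bool" where
  "hl G L \<longleftrightarrow> (\<forall>p\<in>set L. fst p \<in> G (snd p))"

abbreviation sl :: "('a::monoid_add \<times> nat) list \<Rightarrow> 'a" where
  "sl L \<equiv> sum_list (map fst L)"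

lemma hl_append[simp]: "hl G (L1 @ L2) \<longleftrightarrow> hl G L1 \<and> hl G L2"
  by (auto simp: hl_def)
lemma hl_Cons[simp]: "hl G (p # L) \<longleftrightarrow> fst p \<in> G (snd p) \<and> hl G L"
  by (auto simp: hl_def)
lemma hl_Nil[simp]: "hl G []" by (simp add: hl_def)

lemma graded_zero: "graded G \<Longrightarrow> 0 \<in> G n" by (simp add: graded_def)
lemma graded_add: "graded G \<Longrightarrow> x \<in> G n \<Longrightarrow> y \<in> G n \<Longrightarrow> x + y \<in> G n"
  by (simp add: graded_def)
lemma graded_neg: "graded G \<Longrightarrow> x \<in> G n \<Longrightarrow> - x \<in> G n"
  by (simp add: graded_def)
lemma graded_mult: "graded G \<Longrightarrow> x \<in> G i \<Longrightarrow> y \<in> G j \<Longrightarrow> x * y \<in> G (i + j)"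
  by (simp add: graded_def)

lemma graded_sum_ex: "graded G \<Longrightarrow> \<forall>x. \<exists>f N. (\<forall>n. f n \<in> G n) \<and> x = (\<Sum>n<N. f n)"
  unfolding graded_def by (elim conjE) assumption
lemma graded_uniq: "graded G \<Longrightarrow> \<forall>f N. (\<forall>n. f n \<in> G n) \<and> (\<Sum>n<N. f n) = 0 \<longrightarrow> (\<forall>n<N. f n = 0)"
  unfolding graded_def by (elim conjE) assumption

lemma graded_decomp:
  assumes "graded G" shows "\<exists>L. hl G L \<and> x = sl L"
proof -
  obtain f N where f: "\<forall>n. f n \<in> G n" "x = (\<Sum>n<N. f n)"
    using graded_sum_ex[OF assms] by blast
  define L where "L = map (\<lambda>n. (f n, n)) [0..<N]"
  have 1: "hl G L" using f(1) by (auto simp: hl_def L_def)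
  have "sl L = sum f (set [0..<N])"
    unfolding L_def by (simp only: sum_set_upt_conv_sum_list_nat map_map o_def fst_conv)
  moreover have "set [0..<N] = {..<N}" by auto
  ultimately have "x = sl L" using f(2) by simp
  with 1 show ?thesis by blast
qed

lemma graded_filter_in:
  assumes "graded G" "hl G L" shows "sl (filter (\<lambda>p. snd p = k) L) \<in> G k"
  using assms(2) by (induction L) (auto simp: graded_zero[OF assms(1)] graded_add[OF assms(1)])

lemma regroup:
  assumes "\<forall>p\<in>set L. snd p < N"
  shows "(\<Sum>k<N. sl (filter (\<lambda>p. snd p = k) L)) = sl L"
  using assms
proof (induction L)
  case Nil then show ?case by simp
next
  case (Cons p L)
  have "(\<Sum>k<N. sl (filter (\<lambda>q. snd q = k) (p # L)))
     = (\<Sum>k<N. (if snd p = k then fst p else 0) + sl (filter (\<lambda>q. snd q = k) L))"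
    by (rule sum.cong) auto
  also have "\<dots> = (\<Sum>k<N. (if snd p = k then fst p else 0)) + (\<Sum>k<N. sl (filter (\<lambda>q. snd q = k) L))"
    by (rule sum.distrib)
  also have "\<dots> = fst p + sl L" using Cons by simp
  finally show ?case by simp
qed

lemma hl_zero:
  assumes "graded G" "hl G L" "sl L = 0"
  shows "sl (filter (\<lambda>p. snd p = n) L) = 0"
proof -
  define N where "N = Suc (sum_list (map snd L))"
  have bnd: "\<forall>p\<in>set L. snd p < N"
    unfolding N_def using member_le_sum_list[of _ "map snd L"] by (simp add: le_imp_less_Suc)
  define F where "F k = sl (filter (\<lambda>p. snd p = k) L)" for k
  have FG: "\<forall>k. F k \<in> G k" using graded_filter_in[OF assms(1,2)] by (simp add: F_def)
  have "(\<Sum>k<N. F k) = 0" using regroup[OF bnd] assms(3) by (simp add: F_def)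
  hence "\<forall>k<N. F k = 0" using graded_uniq[OF assms(1)] FG by blast
  moreover have "n \<ge> N \<Longrightarrow> F n = 0"
  proof -
    assume "n \<ge> N"
    hence "filter (\<lambda>p. snd p = n) L = []" using bnd by (auto simp: filter_empty_conv)
    thus ?thesis by (simp add: F_def)
  qed
  ultimately show ?thesis unfolding F_def by (meson not_le)
qed

lemma hl_component:
  assumes "graded G" "hl G L" "x \<in> G n" "x = sl L"
  shows "x = sl (filter (\<lambda>p. snd p = n) L)"
proof -
  let ?L = "(- x, n) # L"
  have "hl G ?L" using assms graded_neg by auto
  moreover have "sl ?L = 0" using assms(4) by simp
  ultimately have "sl (filter (\<lambda>p. snd p = n) ?L) = 0" using hl_zero[OF assms(1)] by blast
  thus ?thesis by (simp add: neg_eq_iff_add_eq_0 eq_neg_iff_add_eq_0 add_eq_0_iff2)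
qed

definition hprod :: "('a::times \<times> nat) list \<Rightarrow> ('a \<times> nat) list \<Rightarrow> ('a \<times> nat) list" where
  "hprod L1 L2 = concat (map (\<lambda>p. map (\<lambda>q. (fst p * fst q, snd p + snd q)) L2) L1)"

lemma hprod_sum: "sl L1 * sl L2 = (sl (hprod L1 L2) :: 'a::ring_1)"
  by (induction L1) (auto simp: hprod_def distrib_right o_def sum_list_addf simp flip: sum_list_const_mult)

lemma hprod_hl: "graded G \<Longrightarrow> hl G L1 \<Longrightarrow> hl G L2 \<Longrightarrow> hl G (hprod L1 L2)"
  by (auto simp: hprod_def hl_def graded_mult)

lemma pos_part_iff:
  assumes "graded G"
  shows "x \<in> pos_part G \<longleftrightarrow> (\<exists>L. hl G L \<and> (\<forall>p\<in>set L. snd p > 0) \<and> x = sl L)"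
proof
  assume "x \<in> pos_part G"
  then obtain f N where f: "\<forall>n. f n \<in> G n" "f 0 = 0" "x = (\<Sum>n<N. f n)"
    unfolding pos_part_def by blast
  let ?L = "map (\<lambda>n. (f n, n)) [1..<N]"
  have "hl G ?L" using f by (auto simp: hl_def)
  moreover have "sl ?L = (\<Sum>n\<in>{1..<N}. f n)"
    by (simp add: o_def flip: sum_set_upt_conv_sum_list_nat)
  moreover have "(\<Sum>n\<in>{1..<N}. f n) = (\<Sum>n<N. f n)"
  proof (cases "N = 0")
    case False
    then show ?thesis using f(2)
      by (simp add: lessThan_atLeast0 sum.atLeast_Suc_lessThan)
  qed simp
  moreover have "\<forall>p\<in>set ?L. snd p > 0" by auto
  ultimately show "\<exists>L. hl G L \<and> (\<forall>p\<in>set L. snd p > 0) \<and> x = sl L" using f by metis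
next
  assume "\<exists>L. hl G L \<and> (\<forall>p\<in>set L. snd p > 0) \<and> x = sl L"
  then obtain L where L: "hl G L" "\<forall>p\<in>set L. snd p > 0" "x = sl L" by blast
  define N where "N = Suc (sum_list (map snd L))"
  have bnd: "\<forall>p\<in>set L. snd p < N"
    unfolding N_def using member_le_sum_list[of _ "map snd L"] by (simp add: le_imp_less_Suc)
  define F where "F k = sl (filter (\<lambda>p. snd p = k) L)" for k
  have 1: "\<forall>n. F n \<in> G n" using graded_filter_in[OF assms L(1)] by (simp add: F_def)
  have "filter (\<lambda>p. snd p = 0) L = []" using L(2) by (auto simp: filter_empty_conv)
  hence 2: "F 0 = 0" unfolding F_def by simp
  have 3: "x = (\<Sum>k<N. F k)" using regroup[OF bnd] L(3) by (simp add: F_def)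
  show "x \<in> pos_part G" unfolding pos_part_def mem_Collect_eq
    using 1 2 3 by blast
qed


lemma rhom_add: "rhom f \<Longrightarrow> f (a + b) = f a + f b" by (simp add: rhom_def)
lemma rhom_mult: "rhom f \<Longrightarrow> f (a * b) = f a * f b" by (simp add: rhom_def)
lemma rhom_one: "rhom f \<Longrightarrow> f 1 = 1" by (simp add: rhom_def)
lemma rhom_zero: "rhom (f::'a::ring_1\<Rightarrow>'b::ring_1) \<Longrightarrow> f 0 = 0"
  using rhom_add[of f 0 0] by simp
lemma rhom_neg: "rhom (f::'a::ring_1\<Rightarrow>'b::ring_1) \<Longrightarrow> f (- a) = - f a"
  using rhom_add[of f "-a" a] rhom_zero[of f] by (simp add: eq_neg_iff_add_eq_0)
lemma rhom_diff: "rhom (f::'a::ring_1\<Rightarrow>'b::ring_1) \<Longrightarrow> f (a - b) = f a - f b"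
  using rhom_add[of f a "-b"] rhom_neg[of f b] by simp
lemma rhom_sum_list: "rhom (f::'a::ring_1\<Rightarrow>'b::ring_1) \<Longrightarrow> f (sum_list (map h xs)) = sum_list (map (\<lambda>x. f (h x)) xs)"
  by (induction xs) (auto simp: rhom_zero rhom_add)
lemma rhom_sum: "rhom (f::'a::ring_1\<Rightarrow>'b::ring_1) \<Longrightarrow> f (sum h S) = sum (\<lambda>x. f (h x)) S"
  by (induction S rule: infinite_finite_induct) (auto simp: rhom_zero rhom_add)

lemma pp_zero: "graded G \<Longrightarrow> 0 \<in> pos_part G"
  unfolding pos_part_def by (rule CollectI, rule exI[of _ "\<lambda>n. 0"], rule exI[of _ 0]) (simp add: graded_zero)

lemma ppI: "graded G \<Longrightarrow> hl G L \<Longrightarrow> \<forall>p\<in>set L. snd p > 0 \<Longrightarrow> x = sl L \<Longrightarrow> x \<in> pos_part G"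
  by (subst pos_part_iff) (simp, rule exI[of _ L], simp)
lemma ppE: assumes "graded G" "x \<in> pos_part G"
  obtains L where "hl G L" "\<forall>p\<in>set L. snd p > 0" "x = sl L"
proof -
  have "\<exists>L. hl G L \<and> (\<forall>p\<in>set L. snd p > 0) \<and> x = sl L" using pos_part_iff[OF assms(1)] assms(2) by (rule iffD1)
  then show ?thesis using that by (elim exE conjE)
qed

lemma pp_add: assumes "graded G" "x \<in> pos_part G" "y \<in> pos_part G" shows "x + y \<in> pos_part G"
proof -
  obtain L1 where 1: "hl G L1" "\<forall>p\<in>set L1. snd p > 0" "x = sl L1" using ppE[OF assms(1,2)] by metis
  obtain L2 where 2: "hl G L2" "\<forall>p\<in>set L2. snd p > 0" "y = sl L2" using ppE[OF assms(1,3)] by metis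
  have "hl G (L1 @ L2) \<and> (\<forall>p\<in>set (L1@L2). snd p > 0) \<and> x + y = sl (L1 @ L2)" using 1 2 by auto
  thus ?thesis using ppI[OF assms(1)] by blast
qed

lemma pp_neg: assumes "graded G" "x \<in> pos_part G" shows "- x \<in> pos_part G"
proof -
  obtain L1 where 1: "hl G L1" "\<forall>p\<in>set L1. snd p > 0" "x = sl L1" using ppE[OF assms(1,2)] by metis
  define L where "L = map (\<lambda>p. (- fst p, snd p)) L1"
  have "sl L = - sl L1" unfolding L_def by (induction L1) auto
  moreover have "hl G L" using 1(1) graded_neg[OF assms(1)] unfolding L_def hl_def by auto
  moreover have "\<forall>p\<in>set L. snd p > 0" using 1(2) unfolding L_def by auto
  ultimately show ?thesis using ppI[OF assms(1)] 1(3) by metis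
qed

lemma pp_diff: "graded G \<Longrightarrow> x \<in> pos_part G \<Longrightarrow> y \<in> pos_part G \<Longrightarrow> x - y \<in> pos_part G"
  using pp_add[of G x "- y"] pp_neg[of G y] by simp

lemma pp_diff_iff: "graded G \<Longrightarrow> y \<in> pos_part G \<Longrightarrow> x - y \<in> pos_part G \<Longrightarrow> x \<in> pos_part G"
  using pp_add[of G "x - y" y] by simp

lemma pp_mult: assumes "graded (G :: nat \<Rightarrow> 'a::ring_1 set)" "x \<in> pos_part G" shows "r * x \<in> pos_part G"
proof -
  obtain L1 where 1: "hl G L1" "\<forall>p\<in>set L1. snd p > 0" "x = sl L1" using ppE[OF assms(1,2)] by metis
  obtain L where L: "hl G L" "r = sl L" using graded_decomp[OF assms(1)] by blast
  have "r * x = sl (hprod L L1)" using L 1 hprod_sum by metis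
  moreover have "hl G (hprod L L1)" using hprod_hl[OF assms(1) L(1) 1(1)] .
  moreover have "\<forall>p\<in>set (hprod L L1). snd p > 0" using 1(2) unfolding hprod_def by auto
  ultimately show ?thesis using ppI[OF assms(1)] by metis
qed



lemma sum_delta_one:
  assumes "finite T" "p0 \<in> T"
  shows "(\<Sum>q\<in>T. of_int (delta p0 q) * (E q :: 'b::ring_1)) = E p0"
proof -
  have "(\<Sum>q\<in>T. of_int (delta p0 q) * E q) = (\<Sum>q\<in>T. if q = p0 then E q else 0)"
    by (rule sum.cong) (auto simp: delta_def)
  also have "\<dots> = E p0" using assms by (simp add: sum.delta)
  finally show ?thesis .
qed

lemma sum_delta_list:
  assumes "finite T" "set L \<subseteq> T"
  shows "(\<Sum>q\<in>T. of_int (sum_list (map (\<lambda>p. delta p q) L)) * (E q :: 'b::ring_1)) = sum_list (map E L)"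
  using assms(2)
proof (induction L)
  case Nil then show ?case by simp
next
  case (Cons p L)
  have "(\<Sum>q\<in>T. of_int (sum_list (map (\<lambda>p. delta p q) (p # L))) * E q)
      = (\<Sum>q\<in>T. of_int (delta p q) * E q + of_int (sum_list (map (\<lambda>p. delta p q) L)) * E q)"
    by (rule sum.cong) (auto simp: distrib_right)
  also have "\<dots> = (\<Sum>q\<in>T. of_int (delta p q) * E q) + (\<Sum>q\<in>T. of_int (sum_list (map (\<lambda>p. delta p q) L)) * E q)"
    by (rule sum.distrib)
  also have "\<dots> = E p + sum_list (map E L)" using Cons sum_delta_one[OF assms(1), of p E] by simp
  finally show ?case by simp
qed

lemma sum_delta_main:
  assumes "finite T" "p0 \<in> T" "set L \<subseteq> T"
  shows "(\<Sum>q\<in>T. of_int (delta p0 q - sum_list (map (\<lambda>p. delta p q) L)) * (E q :: 'b::ring_1))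
         = E p0 - sum_list (map E L)"
proof -
  have "(\<Sum>q\<in>T. of_int (delta p0 q - sum_list (map (\<lambda>p. delta p q) L)) * E q)
     = (\<Sum>q\<in>T. of_int (delta p0 q) * E q - of_int (sum_list (map (\<lambda>p. delta p q) L)) * E q)"
    by (rule sum.cong) (auto simp: left_diff_distrib)
  also have "\<dots> = (\<Sum>q\<in>T. of_int (delta p0 q) * E q) - (\<Sum>q\<in>T. of_int (sum_list (map (\<lambda>p. delta p q) L)) * E q)"
    by (rule sum_subtractf)
  also have "\<dots> = E p0 - sum_list (map E L)"
    using sum_delta_one[OF assms(1,2), of E] sum_delta_list[OF assms(1,3), of E] by simp
  finally show ?thesis .
qed

lemma supp_delta_main:
  "{q. delta p0 q - sum_list (map (\<lambda>p. delta p q) L) \<noteq> 0} \<subseteq> insert p0 (set L)"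
proof
  fix q assume q: "q \<in> {q. delta p0 q - sum_list (map (\<lambda>p. delta p q) L) \<noteq> 0}"
  show "q \<in> insert p0 (set L)"
  proof (rule ccontr)
    assume "q \<notin> insert p0 (set L)"
    hence "delta p0 q = 0" "\<forall>p\<in>set L. delta p q = 0" by (auto simp: delta_def)
    moreover have "(\<Sum>p\<leftarrow>L. delta p q) = (\<Sum>p\<leftarrow>L. 0)"
      using calculation(2) by (intro arg_cong[where f=sum_list] map_cong) auto
    ultimately have "delta p0 q - sum_list (map (\<lambda>p. delta p q) L) = 0"
      by simp
    thus False using q by simp
  qed
qed

lemma alg_gen_zero: "rhom \<phi> \<Longrightarrow> 0 \<in> alg_gen \<phi> S"
  using alg_gen.scal[of \<phi> 0 S] rhom_zero[of \<phi>] by simp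

lemma alg_gen_sl: "rhom \<phi> \<Longrightarrow> \<forall>p\<in>set L. fst p \<in> alg_gen \<phi> S \<Longrightarrow> sl L \<in> alg_gen \<phi> S"
  by (induction L) (auto simp: alg_gen_zero intro: alg_gen.add)


theorem proposition2p2:
  fixes \<psi> :: "'r1::comm_ring_1 \<Rightarrow> 'r2::comm_ring_1"
    and \<phi>1 :: "'r1 \<Rightarrow> 'm1::ring_1" and \<phi>2 :: "'r2 \<Rightarrow> 'm2::ring_1"
    and \<psi>s :: "'m1 \<Rightarrow> 'm2"
    and G1 :: "nat \<Rightarrow> 'r1 set" and G2 :: "nat \<Rightarrow> 'r2 set"
    and H1 :: "nat \<Rightarrow> 'm1 set" and H2 :: "nat \<Rightarrow> 'm2 set"
    and g :: "'l \<Rightarrow> 'm2" and gt :: "'l \<Rightarrow> 'm1"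
  assumes alg1: "graded_algebra G1 \<phi>1 H1"
    and alg2: "graded_algebra G2 \<phi>2 H2"
    and psi_hom: "rhom \<psi>" and psi_graded: "\<forall>n. \<psi> ` G1 n \<subseteq> G2 n"
    and free: "free_module \<phi>1"
    and tensor: "base_change \<psi> \<phi>1 \<phi>2 \<psi>s"
    and psis_graded: "\<forall>n. \<psi>s ` H1 n \<subseteq> H2 n"
    and quot_inj: "\<forall>r. \<psi> r \<in> pos_part G2 \<longleftrightarrow> r \<in> pos_part G1"
    and quot_surj: "\<forall>s. \<exists>r. s - \<psi> r \<in> pos_part G2"
    and gens: "alg_gen \<phi>2 (range g) = UNIV"
    and g_hom: "\<forall>l. homogeneous H2 (g l)"
    and gt_hom: "\<forall>l. homogeneous H1 (gt l)"
    and lift: "\<forall>l. \<psi>s (gt l) = g l"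
  shows "alg_gen \<phi>1 (range gt) = UNIV"
proof -
  have gG1: "graded G1" and gH1: "graded H1" and h1: "rhom \<phi>1"
    and c1: "\<And>r m. \<phi>1 r * m = m * \<phi>1 r" and d1: "\<And>n. \<phi>1 ` G1 n \<subseteq> H1 n"
    using alg1 unfolding graded_algebra_def by auto
  have gG2: "graded G2" and h2: "rhom \<phi>2"
    and c2: "\<And>r m. \<phi>2 r * m = m * \<phi>2 r"
    using alg2 unfolding graded_algebra_def by auto
  have hs: "rhom \<psi>s" and lin: "\<And>s m. \<psi>s (\<phi>1 s * m) = \<phi>2 (\<psi> s) * \<psi>s m"
    and surj2: "\<And>m2. \<exists>S. finite S \<and> m2 = (\<Sum>p\<in>S. \<phi>2 (fst p) * \<psi>s (snd p))"
    and inj: "\<And>f. finite {q. f q \<noteq> 0} \<Longrightarrow>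
          (\<Sum>q\<in>{q. f q \<noteq> 0}. of_int (f q) * (\<phi>2 (fst q) * \<psi>s (snd q))) = 0
          \<Longrightarrow> f \<in> tensor_zero \<psi> \<phi>1"
    using tensor unfolding base_change_def by auto
  define A where "A = alg_gen \<phi>1 (range gt)"
  define P where "P = {x. \<exists>L. (\<forall>p\<in>set L. fst p \<in> pos_part G1) \<and> x = sum_list (map (\<lambda>p. \<phi>1 (fst p) * snd p) L)}"
  define Q where "Q = {x. \<exists>L. (\<forall>p\<in>set L. fst p \<in> pos_part G2) \<and> x = sum_list (map (\<lambda>p. \<phi>2 (fst p) * snd p) L)}"
  have P0: "0 \<in> P" unfolding P_def by (rule CollectI, rule exI[of _ "[]"]) simp
  have Padd: "x + y \<in> P" if H: "x \<in> P" "y \<in> P" for x y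
  proof -
    obtain L1 where "\<forall>p\<in>set L1. fst p \<in> pos_part G1" "x = sum_list (map (\<lambda>p. \<phi>1 (fst p) * snd p) L1)"
      using H(1) unfolding P_def by blast
    moreover obtain L2 where "\<forall>p\<in>set L2. fst p \<in> pos_part G1" "y = sum_list (map (\<lambda>p. \<phi>1 (fst p) * snd p) L2)"
      using H(2) unfolding P_def by blast
    ultimately show ?thesis unfolding P_def by (intro CollectI exI[of _ "L1 @ L2"]) auto
  qed
  have Pneg: "- x \<in> P" if H: "x \<in> P" for x
  proof -
    obtain L1 where L1: "\<forall>p\<in>set L1. fst p \<in> pos_part G1" "x = sum_list (map (\<lambda>p. \<phi>1 (fst p) * snd p) L1)"
      using H(1) unfolding P_def by blast
    define L where "L = map (\<lambda>p. (- fst p, snd p)) L1"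
    have "- x = sum_list (map (\<lambda>p. \<phi>1 (fst p) * snd p) L)"
      unfolding L1(2) L_def by (induction L1) (auto simp: rhom_neg[OF h1])
    moreover have "\<forall>p\<in>set L. fst p \<in> pos_part G1" using L1(1) pp_neg[OF gG1] unfolding L_def by auto
    ultimately show ?thesis unfolding P_def by blast
  qed
  have Pdiff: "x - y \<in> P" if "x \<in> P" "y \<in> P" for x y
    using Padd[OF that(1) Pneg[OF that(2)]] by simp
  have Psing: "\<phi>1 r * m \<in> P" if "r \<in> pos_part G1" for r m
    unfolding P_def using that by (intro CollectI exI[of _ "[(r, m)]"]) auto
  have Q0: "0 \<in> Q" unfolding Q_def by (rule CollectI, rule exI[of _ "[]"]) simp
  have Qadd: "x + y \<in> Q" if H: "x \<in> Q" "y \<in> Q" for x y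
  proof -
    obtain L1 where "\<forall>p\<in>set L1. fst p \<in> pos_part G2" "x = sum_list (map (\<lambda>p. \<phi>2 (fst p) * snd p) L1)"
      using H(1) unfolding Q_def by blast
    moreover obtain L2 where "\<forall>p\<in>set L2. fst p \<in> pos_part G2" "y = sum_list (map (\<lambda>p. \<phi>2 (fst p) * snd p) L2)"
      using H(2) unfolding Q_def by blast
    ultimately show ?thesis unfolding Q_def by (intro CollectI exI[of _ "L1 @ L2"]) auto
  qed
  have Qsing: "\<phi>2 r * m \<in> Q" if "r \<in> pos_part G2" for r m
    unfolding Q_def using that by (intro CollectI exI[of _ "[(r, m)]"]) auto
  have Qright: "x * w \<in> Q" if H: "x \<in> Q" for x w
  proof -
    obtain L1 where L1: "\<forall>p\<in>set L1. fst p \<in> pos_part G2" "x = sum_list (map (\<lambda>p. \<phi>2 (fst p) * snd p) L1)"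
      using H(1) unfolding Q_def by blast
    define L where "L = map (\<lambda>p. (fst p, snd p * w)) L1"
    have "x * w = sum_list (map (\<lambda>p. \<phi>2 (fst p) * snd p) L)"
      unfolding L1(2) L_def by (induction L1) (auto simp: distrib_right mult.assoc)
    moreover have "\<forall>p\<in>set L. fst p \<in> pos_part G2" using L1(1) unfolding L_def by auto
    ultimately show ?thesis unfolding Q_def by blast
  qed
  have Qleft: "w * x \<in> Q" if H: "x \<in> Q" for x w
  proof -
    obtain L1 where L1: "\<forall>p\<in>set L1. fst p \<in> pos_part G2" "x = sum_list (map (\<lambda>p. \<phi>2 (fst p) * snd p) L1)"
      using H(1) unfolding Q_def by blast
    define L where "L = map (\<lambda>p. (fst p, w * snd p)) L1"
    have "w * x = sum_list (map (\<lambda>p. \<phi>2 (fst p) * snd p) L)"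
      unfolding L1(2) L_def
      by (induction L1) (auto simp: distrib_left mult.assoc[symmetric] c2)
    moreover have "\<forall>p\<in>set L. fst p \<in> pos_part G2" using L1(1) unfolding L_def by auto
    ultimately show ?thesis unfolding Q_def by blast
  qed
  have step1: "\<exists>a\<in>A. z - \<psi>s a \<in> Q" if "z \<in> alg_gen \<phi>2 (range g)" for z
    using that
  proof (induction rule: alg_gen.induct)
    case (scal r)
    obtain r' where r': "r - \<psi> r' \<in> pos_part G2" using quot_surj by blast
    have "\<psi>s (\<phi>1 r') = \<phi>2 (\<psi> r')" using lin[of r' 1] rhom_one[OF hs] by simp
    hence "\<phi>2 r - \<psi>s (\<phi>1 r') = \<phi>2 (r - \<psi> r') * 1" by (simp add: rhom_diff[OF h2])
    also have "\<dots> \<in> Q" using Qsing[OF r'] .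
    finally have "\<phi>2 r - \<psi>s (\<phi>1 r') \<in> Q" .
    moreover have "\<phi>1 r' \<in> A" unfolding A_def by (rule alg_gen.scal)
    ultimately show ?case by blast
  next
    case (gen x)
    then obtain l where "x = g l" by blast
    hence "x - \<psi>s (gt l) = 0" using lift by simp
    thus ?case using Q0 unfolding A_def by (metis alg_gen.gen rangeI)
  next
    case (add x y)
    then obtain a b where ab: "a \<in> A" "x - \<psi>s a \<in> Q" "b \<in> A" "y - \<psi>s b \<in> Q" by blast
    have eq: "x + y - \<psi>s (a + b) = (x - \<psi>s a) + (y - \<psi>s b)" by (simp add: rhom_add[OF hs])
    have "x + y - \<psi>s (a + b) \<in> Q" by (subst eq) (rule Qadd[OF ab(2,4)])
    moreover have "a + b \<in> A" using ab unfolding A_def by (simp add: alg_gen.add)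
    ultimately show ?case by blast
  next
    case (mult x y)
    then obtain a b where ab: "a \<in> A" "x - \<psi>s a \<in> Q" "b \<in> A" "y - \<psi>s b \<in> Q" by blast
    have eq: "x * y - \<psi>s (a * b) = (x - \<psi>s a) * y + \<psi>s a * (y - \<psi>s b)"
      by (simp add: rhom_mult[OF hs] algebra_simps)
    have "x * y - \<psi>s (a * b) \<in> Q" by (subst eq) (rule Qadd[OF Qright[OF ab(2)] Qleft[OF ab(4)]])
    moreover have "a * b \<in> A" using ab unfolding A_def by (simp add: alg_gen.mult)
    ultimately show ?case by blast
  qed
  have step2: "x \<in> P" if xQ: "\<psi>s x \<in> Q" for x
  proof -
    define \<rho> where "\<rho> s = (SOME r. s - \<psi> r \<in> pos_part G2)" for s
    have \<rho>s: "s - \<psi> (\<rho> s) \<in> pos_part G2" for s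
    proof -
      have "\<exists>r. s - \<psi> r \<in> pos_part G2" using quot_surj by blast
      thus ?thesis unfolding \<rho>_def by (rule someI_ex)
    qed
    have \<rho>add: "\<rho> (a + b) - \<rho> a - \<rho> b \<in> pos_part G1" for a b
    proof -
      have "\<psi> (\<rho> (a + b) - \<rho> a - \<rho> b) = - (((a + b) - \<psi> (\<rho> (a + b))) - (a - \<psi> (\<rho> a)) - (b - \<psi> (\<rho> b)))"
        by (simp add: rhom_diff[OF psi_hom] rhom_add[OF psi_hom] algebra_simps)
      also have "\<dots> \<in> pos_part G2"
        by (rule pp_neg[OF gG2 pp_diff[OF gG2 pp_diff[OF gG2 \<rho>s \<rho>s] \<rho>s]])
      finally show ?thesis using quot_inj by blast
    qed
    have \<rho>mul: "\<rho> (r * \<psi> s) - \<rho> r * s \<in> pos_part G1" for r s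
    proof -
      have "\<psi> (\<rho> (r * \<psi> s) - \<rho> r * s) = - ((r * \<psi> s - \<psi> (\<rho> (r * \<psi> s))) - \<psi> s * (r - \<psi> (\<rho> r)))"
        by (simp add: rhom_diff[OF psi_hom] rhom_mult[OF psi_hom] algebra_simps)
      also have "\<dots> \<in> pos_part G2"
        by (rule pp_neg[OF gG2 pp_diff[OF gG2 \<rho>s pp_mult[OF gG2 \<rho>s]]])
      finally show ?thesis using quot_inj by blast
    qed
    have \<rho>1: "1 - \<rho> 1 \<in> pos_part G1"
    proof -
      have "\<psi> (1 - \<rho> 1) = 1 - \<psi> (\<rho> 1)" by (simp add: rhom_diff[OF psi_hom] rhom_one[OF psi_hom])
      also have "\<dots> \<in> pos_part G2" by (rule \<rho>s)
      finally show ?thesis using quot_inj by blast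
    qed
    have \<rho>pos: "\<rho> s \<in> pos_part G1" if "s \<in> pos_part G2" for s
    proof -
      have "\<psi> (\<rho> s) = s - (s - \<psi> (\<rho> s))" by simp
      also have "\<dots> \<in> pos_part G2" by (rule pp_diff[OF gG2 that \<rho>s])
      finally show ?thesis using quot_inj by blast
    qed
    define E where "E q = \<phi>1 (\<rho> (fst q)) * snd q" for q
    define \<Phi> where "\<Phi> T f = (\<Sum>q\<in>T. of_int (f q) * E q)" for T and f :: "'r2 \<times> 'm1 \<Rightarrow> int"
    define ok where "ok f \<longleftrightarrow> finite {q. f q \<noteq> 0} \<and> (\<forall>T. finite T \<longrightarrow> {q. f q \<noteq> 0} \<subseteq> T \<longrightarrow> \<Phi> T f \<in> P)" for f
    have okD1: "finite {q. f q \<noteq> 0}" if "ok f" for f using that unfolding ok_def by (elim conjE)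
    have okD2: "\<Phi> T f \<in> P" if "ok f" "finite T" "{q. f q \<noteq> 0} \<subseteq> T" for f T
    proof -
      have "\<forall>T. finite T \<longrightarrow> {q. f q \<noteq> 0} \<subseteq> T \<longrightarrow> \<Phi> T f \<in> P" using that(1) unfolding ok_def by (elim conjE)
      thus ?thesis using that(2,3) by blast
    qed
    have okI: "ok f" if "finite {q. f q \<noteq> 0}" "\<And>T. finite T \<Longrightarrow> {q. f q \<noteq> 0} \<subseteq> T \<Longrightarrow> \<Phi> T f \<in> P" for f
      unfolding ok_def using that by blast
    have \<Phi>mono: "\<Phi> T f = \<Phi> T' f" if "finite T'" "{q. f q \<noteq> 0} \<subseteq> T" "T \<subseteq> T'" for T T' f
    proof -
      have "\<forall>i\<in>T' - T. of_int (f i) * E i = 0"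
      proof
        fix i assume "i \<in> T' - T"
        hence "f i = 0" using that(2) by blast
        thus "of_int (f i) * E i = 0" by simp
      qed
      thus ?thesis unfolding \<Phi>_def using that by (intro sum.mono_neutral_left) auto
    qed
    have GEN: "ok (\<lambda>q. delta p0 q - sum_list (map (\<lambda>p. delta p q) L))"
      if "E p0 - sum_list (map E L) \<in> P" for p0 L
    proof -
      let ?f = "\<lambda>q. delta p0 q - sum_list (map (\<lambda>p. delta p q) L)"
      have sp: "{q. ?f q \<noteq> 0} \<subseteq> insert p0 (set L)" by (rule supp_delta_main)
      have "\<Phi> T ?f \<in> P" if "finite T" "{q. ?f q \<noteq> 0} \<subseteq> T" for T
      proof -
        have "\<Phi> T ?f = \<Phi> (T \<union> insert p0 (set L)) ?f" using that by (intro \<Phi>mono) auto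
        also have "\<dots> = E p0 - sum_list (map E L)" unfolding \<Phi>_def
          by (rule sum_delta_main) (use that in auto)
        finally show ?thesis using \<open>E p0 - sum_list (map E L) \<in> P\<close> by simp
      qed
      moreover have "finite {q. ?f q \<noteq> 0}" using finite_subset[OF sp] by simp
      ultimately show ?thesis by (intro okI) auto
    qed
    have TZ: "ok f" if "f \<in> tensor_zero \<psi> \<phi>1" for f
      using that
    proof (induction rule: tensor_zero.induct)
      case zero
      show ?case by (rule okI) (simp_all add: \<Phi>_def P0)
    next
      case (diff f g)
      have ff: "finite {q. f q \<noteq> 0}" "finite {q. g q \<noteq> 0}" using okD1 diff.IH by blast+
      have "{q. f q - g q \<noteq> 0} \<subseteq> {q. f q \<noteq> 0} \<union> {q. g q \<noteq> 0}" by auto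
      hence fin: "finite {q. f q - g q \<noteq> 0}" using finite_subset finite_UnI[OF ff] by blast
      show ?case
      proof (rule okI[OF fin])
        fix T assume T: "finite T" "{q. f q - g q \<noteq> 0} \<subseteq> T"
        define T' where "T' = T \<union> {q. f q \<noteq> 0} \<union> {q. g q \<noteq> 0}"
        have finT: "finite T'" unfolding T'_def using T(1) ff by blast
        have "\<Phi> T (\<lambda>q. f q - g q) = \<Phi> T' (\<lambda>q. f q - g q)" by (rule \<Phi>mono[OF finT T(2)]) (auto simp: T'_def)
        also have "\<dots> = \<Phi> T' f - \<Phi> T' g" unfolding \<Phi>_def
          by (simp add: left_diff_distrib sum_subtractf)
        also have "\<dots> \<in> P"
        proof (rule Pdiff)
          show "\<Phi> T' f \<in> P" by (rule okD2[OF diff.IH(1) finT]) (auto simp: T'_def)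
          show "\<Phi> T' g \<in> P" by (rule okD2[OF diff.IH(2) finT]) (auto simp: T'_def)
        qed
        finally show "\<Phi> T (\<lambda>q. f q - g q) \<in> P" .
      qed
    next
      case (add_left r r' m)
      have eq: "(\<lambda>q. delta (r + r', m) q - delta (r, m) q - delta (r', m) q)
          = (\<lambda>q. delta (r + r', m) q - sum_list (map (\<lambda>p. delta p q) [(r, m), (r', m)]))"
        by (simp add: fun_eq_iff)
      have "E (r + r', m) - sum_list (map E [(r, m), (r', m)]) = \<phi>1 (\<rho> (r + r') - \<rho> r - \<rho> r') * m"
        unfolding E_def by (simp add: rhom_diff[OF h1] rhom_add[OF h1] algebra_simps)
      also have "\<dots> \<in> P" by (rule Psing[OF \<rho>add])
      finally show ?case unfolding eq by (rule GEN)
    next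
      case (add_right r m m')
      have eq: "(\<lambda>q. delta (r, m + m') q - delta (r, m) q - delta (r, m') q)
          = (\<lambda>q. delta (r, m + m') q - sum_list (map (\<lambda>p. delta p q) [(r, m), (r, m')]))"
        by (simp add: fun_eq_iff)
      have "E (r, m + m') - sum_list (map E [(r, m), (r, m')]) = 0"
        unfolding E_def by (simp add: algebra_simps)
      also have "\<dots> \<in> P" by (rule P0)
      finally show ?case unfolding eq by (rule GEN)
    next
      case (scalar r s m)
      have eq: "(\<lambda>q. delta (r * \<psi> s, m) q - delta (r, \<phi>1 s * m) q)
          = (\<lambda>q. delta (r * \<psi> s, m) q - sum_list (map (\<lambda>p. delta p q) [(r, \<phi>1 s * m)]))"
        by (simp add: fun_eq_iff)
      have "E (r * \<psi> s, m) - sum_list (map E [(r, \<phi>1 s * m)]) = \<phi>1 (\<rho> (r * \<psi> s) - \<rho> r * s) * m"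
        unfolding E_def by (simp add: rhom_diff[OF h1] rhom_mult[OF h1] left_diff_distrib mult.assoc)
      also have "\<dots> \<in> P" by (rule Psing[OF \<rho>mul])
      finally show ?case unfolding eq by (rule GEN)
    qed
    define E2 where "E2 q = \<phi>2 (fst q) * \<psi>s (snd q)" for q
    have conv: "\<exists>L'. (\<forall>p\<in>set L'. fst p \<in> pos_part G2) \<and>
        sum_list (map (\<lambda>p. \<phi>2 (fst p) * snd p) L) = sum_list (map E2 L')"
      if "\<forall>p\<in>set L. fst p \<in> pos_part G2" for L
      using that
    proof (induction L)
      case Nil show ?case by (intro exI[of _ "[]"]) simp
    next
      case (Cons p L)
      then obtain L0 where L0: "\<forall>p\<in>set L0. fst p \<in> pos_part G2"
        "sum_list (map (\<lambda>p. \<phi>2 (fst p) * snd p) L) = sum_list (map E2 L0)" by auto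
      have sp: "fst p \<in> pos_part G2" using Cons.prems by simp
      obtain S where S: "finite S" "snd p = (\<Sum>q\<in>S. \<phi>2 (fst q) * \<psi>s (snd q))" using surj2 by blast
      obtain xs where xs: "distinct xs" "set xs = S" using finite_distinct_list[OF S(1)] by blast
      define Lw where "Lw = map (\<lambda>q. (fst q * fst p, snd q)) xs"
      have "\<phi>2 (fst p) * snd p = (\<Sum>q\<in>S. \<phi>2 (fst p) * (\<phi>2 (fst q) * \<psi>s (snd q)))"
        unfolding S(2) by (rule sum_distrib_left)
      also have "\<dots> = (\<Sum>q\<in>S. E2 (fst q * fst p, snd q))"
        unfolding E2_def
      proof (rule sum.cong)
        fix q :: "'r2 \<times> 'm1"
        have "\<phi>2 (fst q * fst p) = \<phi>2 (fst p) * \<phi>2 (fst q)"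
          by (simp add: mult.commute[of "fst q"] rhom_mult[OF h2])
        thus "\<phi>2 (fst p) * (\<phi>2 (fst q) * \<psi>s (snd q)) = \<phi>2 (fst (fst q * fst p, snd q)) * \<psi>s (snd (fst q * fst p, snd q))"
          by (simp add: mult.assoc)
      qed simp
      also have "\<dots> = sum_list (map E2 Lw)" unfolding Lw_def xs(2)[symmetric]
        using sum.distinct_set_conv_list[OF xs(1)] by (simp add: o_def)
      finally have e1: "\<phi>2 (fst p) * snd p = sum_list (map E2 Lw)" .
      have "\<forall>q\<in>set Lw. fst q \<in> pos_part G2" unfolding Lw_def using pp_mult[OF gG2 sp] by auto
      hence "(\<forall>q\<in>set (Lw @ L0). fst q \<in> pos_part G2) \<and>
          sum_list (map (\<lambda>p. \<phi>2 (fst p) * snd p) (p # L)) = sum_list (map E2 (Lw @ L0))"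
        using L0 e1 by auto
      thus ?case by blast
    qed
    obtain L where L: "\<forall>p\<in>set L. fst p \<in> pos_part G2" "\<psi>s x = sum_list (map (\<lambda>p. \<phi>2 (fst p) * snd p) L)"
      using xQ unfolding Q_def by blast
    obtain L' where L': "\<forall>p\<in>set L'. fst p \<in> pos_part G2" "\<psi>s x = sum_list (map E2 L')"
      using conv[OF L(1)] L(2) by (elim exE conjE) simp
    define F where "F q = delta (1, x) q - sum_list (map (\<lambda>p. delta p q) L')" for q
    define T0 where "T0 = insert (1, x) (set L')"
    have finT0: "finite T0" unfolding T0_def by simp
    have spF: "{q. F q \<noteq> 0} \<subseteq> T0" unfolding F_def T0_def by (rule supp_delta_main)
    have finF: "finite {q. F q \<noteq> 0}" using finite_subset[OF spF finT0] .
    have "(\<Sum>q\<in>{q. F q \<noteq> 0}. of_int (F q) * E2 q) = (\<Sum>q\<in>T0. of_int (F q) * E2 q)"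
      using spF finT0 by (intro sum.mono_neutral_left) auto
    also have "\<dots> = E2 (1, x) - sum_list (map E2 L')" unfolding F_def
      by (rule sum_delta_main) (auto simp: T0_def finT0)
    also have "\<dots> = 0" using L'(2) by (simp add: E2_def rhom_one[OF h2])
    finally have "F \<in> tensor_zero \<psi> \<phi>1" using inj[OF finF] unfolding E2_def by simp
    hence "ok F" by (rule TZ)
    hence "\<Phi> T0 F \<in> P" using finT0 spF by (rule okD2)
    moreover have "\<Phi> T0 F = E (1, x) - sum_list (map E L')" unfolding \<Phi>_def F_def
      by (rule sum_delta_main) (auto simp: T0_def finT0)
    ultimately have i1: "\<phi>1 (\<rho> 1) * x - sum_list (map E L') \<in> P" by (simp add: E_def)
    have eqE: "map E L' = map (\<lambda>p. \<phi>1 (fst p) * snd p) (map (\<lambda>p. (\<rho> (fst p), snd p)) L')"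
      by (simp add: E_def)
    have i2: "sum_list (map E L') \<in> P" unfolding P_def eqE
      using L'(1) \<rho>pos
      by (intro CollectI exI[of _ "map (\<lambda>p. (\<rho> (fst p), snd p)) L'"]) auto
    have i3: "\<phi>1 (1 - \<rho> 1) * x \<in> P" by (rule Psing[OF \<rho>1])
    have "x = (\<phi>1 (\<rho> 1) * x - sum_list (map E L')) + sum_list (map E L') + \<phi>1 (1 - \<rho> 1) * x"
      by (simp add: rhom_diff[OF h1] rhom_one[OF h1] algebra_simps)
    also have "\<dots> \<in> P" by (rule Padd[OF Padd[OF i1 i2] i3])
    finally show ?thesis .
  qed
  have step3: "\<exists>a\<in>A. m - a \<in> P" for m
  proof -
    have "\<psi>s m \<in> alg_gen \<phi>2 (range g)" using gens by simp
    then obtain a where a: "a \<in> A" "\<psi>s m - \<psi>s a \<in> Q" using step1 by blast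
    hence "m - a \<in> P" using step2 rhom_diff[OF hs] by metis
    thus ?thesis using a(1) by blast
  qed
  have step4: "\<exists>L. hl H1 L \<and> a = sl L \<and> (\<forall>p\<in>set L. fst p \<in> A)" if "a \<in> A" for a
    using that unfolding A_def
  proof (induction rule: alg_gen.induct)
    case (scal r)
    obtain Lr where Lr: "hl G1 Lr" "r = sl Lr" using graded_decomp[OF gG1] by blast
    define L where "L = map (\<lambda>p. (\<phi>1 (fst p), snd p)) Lr"
    have "\<phi>1 r = sl L" unfolding Lr(2) L_def by (simp add: rhom_sum_list[OF h1] o_def)
    moreover have "hl H1 L" using Lr(1) d1 unfolding L_def hl_def by auto
    moreover have "\<forall>p\<in>set L. fst p \<in> alg_gen \<phi>1 (range gt)" unfolding L_def by (auto intro: alg_gen.scal)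
    ultimately show ?case by blast
  next
    case (gen x)
    then obtain l where l: "x = gt l" by blast
    then obtain d where "x \<in> H1 d" using gt_hom unfolding homogeneous_def by blast
    hence "hl H1 [(x, d)] \<and> x = sl [(x, d)] \<and> (\<forall>p\<in>set [(x,d)]. fst p \<in> alg_gen \<phi>1 (range gt))"
      using l by (auto intro: alg_gen.gen)
    thus ?case by blast
  next
    case (add x y)
    then obtain L1 L2 where "hl H1 L1" "x = sl L1" "\<forall>p\<in>set L1. fst p \<in> alg_gen \<phi>1 (range gt)"
       "hl H1 L2" "y = sl L2" "\<forall>p\<in>set L2. fst p \<in> alg_gen \<phi>1 (range gt)" by blast
    hence "hl H1 (L1 @ L2) \<and> x + y = sl (L1 @ L2) \<and> (\<forall>p\<in>set (L1 @ L2). fst p \<in> alg_gen \<phi>1 (range gt))"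
      by auto
    thus ?case by blast
  next
    case (mult x y)
    then obtain L1 L2 where L: "hl H1 L1" "x = sl L1" "\<forall>p\<in>set L1. fst p \<in> alg_gen \<phi>1 (range gt)"
       "hl H1 L2" "y = sl L2" "\<forall>p\<in>set L2. fst p \<in> alg_gen \<phi>1 (range gt)" by blast
    have "hl H1 (hprod L1 L2)" using hprod_hl[OF gH1 L(1) L(4)] .
    moreover have "x * y = sl (hprod L1 L2)" using L(2,5) hprod_sum by metis
    moreover have "\<forall>p\<in>set (hprod L1 L2). fst p \<in> alg_gen \<phi>1 (range gt)"
      using L(3,6) unfolding hprod_def by (auto intro: alg_gen.mult)
    ultimately show ?case by blast
  qed
  have step5: "\<exists>L'. hl H1 L' \<and> sum_list (map (\<lambda>p. \<phi>1 (fst p) * snd p) L) = sl L' \<and>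
      (\<forall>p\<in>set L'. \<exists>r k m e. fst p = \<phi>1 r * m \<and> r \<in> G1 k \<and> k > 0 \<and> m \<in> H1 e \<and> snd p = k + e)"
    if "\<forall>p\<in>set L. fst p \<in> pos_part G1" for L
    using that
  proof (induction L)
    case Nil
    have "hl H1 [] \<and> sum_list (map (\<lambda>p. \<phi>1 (fst p) * snd p) []) = sl []" by simp
    thus ?case by (intro exI[of _ "[]"]) simp
  next
    case (Cons p L)
    then obtain L0 where L0: "hl H1 L0" "sum_list (map (\<lambda>p. \<phi>1 (fst p) * snd p) L) = sl L0"
      "\<forall>p\<in>set L0. \<exists>r k m e. fst p = \<phi>1 r * m \<and> r \<in> G1 k \<and> k > 0 \<and> m \<in> H1 e \<and> snd p = k + e"
      by auto
    have "fst p \<in> pos_part G1" using Cons.prems by simp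
    then obtain Lr where Lr: "hl G1 Lr" "\<forall>q\<in>set Lr. snd q > 0" "fst p = sl Lr" by (rule ppE[OF gG1])
    obtain Lm where Lm: "hl H1 Lm" "snd p = sl Lm" using graded_decomp[OF gH1] by blast
    define Lr' where "Lr' = map (\<lambda>q. (\<phi>1 (fst q), snd q)) Lr"
    have "\<phi>1 (fst p) = sl Lr'" unfolding Lr(3) Lr'_def by (simp add: rhom_sum_list[OF h1] o_def)
    have hr': "hl H1 Lr'" using Lr(1) d1 unfolding Lr'_def hl_def by auto
    have e1: "\<phi>1 (fst p) * snd p = sl (hprod Lr' Lm)"
      using \<open>\<phi>1 (fst p) = sl Lr'\<close> Lm(2) hprod_sum by metis
    have h1': "hl H1 (hprod Lr' Lm)" using hprod_hl[OF gH1 hr' Lm(1)] .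
    have p1: "\<forall>q\<in>set (hprod Lr' Lm). \<exists>r k m e. fst q = \<phi>1 r * m \<and> r \<in> G1 k \<and> k > 0 \<and> m \<in> H1 e \<and> snd q = k + e"
    proof
      fix q assume "q \<in> set (hprod Lr' Lm)"
      then obtain q1 q2 where q: "q1 \<in> set Lr" "q2 \<in> set Lm" "q = (\<phi>1 (fst q1) * fst q2, snd q1 + snd q2)"
        unfolding hprod_def Lr'_def by auto
      have "fst q1 \<in> G1 (snd q1)" "snd q1 > 0" "fst q2 \<in> H1 (snd q2)"
        using q Lr(1,2) Lm(1) unfolding hl_def by auto
      thus "\<exists>r k m e. fst q = \<phi>1 r * m \<and> r \<in> G1 k \<and> k > 0 \<and> m \<in> H1 e \<and> snd q = k + e"
        using q(3) by auto
    qed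
    have "hl H1 (hprod Lr' Lm @ L0) \<and> sum_list (map (\<lambda>p. \<phi>1 (fst p) * snd p) (p # L)) = sl (hprod Lr' Lm @ L0) \<and>
      (\<forall>q\<in>set (hprod Lr' Lm @ L0). \<exists>r k m e. fst q = \<phi>1 r * m \<and> r \<in> G1 k \<and> k > 0 \<and> m \<in> H1 e \<and> snd q = k + e)"
      using L0 e1 h1' p1 by auto
    thus ?case by blast
  qed
  have step6: "\<forall>m\<in>H1 n. m \<in> A" for n
  proof (induction n rule: less_induct)
    case (less n)
    show ?case
    proof
      fix m assume mH: "m \<in> H1 n"
      obtain a where a: "a \<in> A" "m - a \<in> P" using step3 by blast
      obtain La where La: "hl H1 La" "a = sl La" "\<forall>p\<in>set La. fst p \<in> A" using step4[OF a(1)] by blast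
      obtain L where L: "\<forall>p\<in>set L. fst p \<in> pos_part G1" "m - a = sum_list (map (\<lambda>p. \<phi>1 (fst p) * snd p) L)"
        using a(2) unfolding P_def by blast
      obtain Lp where Lp: "hl H1 Lp" "sum_list (map (\<lambda>p. \<phi>1 (fst p) * snd p) L) = sl Lp"
        "\<forall>p\<in>set Lp. \<exists>r k m e. fst p = \<phi>1 r * m \<and> r \<in> G1 k \<and> k > 0 \<and> m \<in> H1 e \<and> snd p = k + e"
        using step5[OF L(1)] by (elim exE conjE) blast
      have Lp2: "m - a = sl Lp" using L(2) Lp(2) by simp
      have mL: "m = sl (La @ Lp)" using La(2) Lp2 by (simp add: algebra_simps)
      have hL: "hl H1 (La @ Lp)" using La(1) Lp(1) by simp
      have mf: "m = sl (filter (\<lambda>p. snd p = n) (La @ Lp))" using hl_component[OF gH1 hL mH mL] .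
      have "\<forall>p\<in>set (filter (\<lambda>p. snd p = n) (La @ Lp)). fst p \<in> A"
      proof
        fix p assume p: "p \<in> set (filter (\<lambda>p. snd p = n) (La @ Lp))"
        show "fst p \<in> A"
        proof (cases "p \<in> set La")
          case True then show ?thesis using La(3) by blast
        next
          case False
          hence pL: "p \<in> set Lp" "snd p = n" using p by auto
          have "\<exists>r k m e. fst p = \<phi>1 r * m \<and> r \<in> G1 k \<and> k > 0 \<and> m \<in> H1 e \<and> snd p = k + e"
            using Lp(3) pL(1) by (rule bspec)
          then obtain r k m' e where pe: "fst p = \<phi>1 r * m'" "r \<in> G1 k" "k > 0" "m' \<in> H1 e" "snd p = k + e"
            by (elim exE conjE)
          have "e < n" using pe pL(2) by simp
          hence "m' \<in> A" using less pe(4) by blast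
          moreover have "\<phi>1 r \<in> A" unfolding A_def by (rule alg_gen.scal)
          ultimately show ?thesis using pe(1) unfolding A_def by (simp add: alg_gen.mult)
        qed
      qed
      hence "sl (filter (\<lambda>p. snd p = n) (La @ Lp)) \<in> A" unfolding A_def by (rule alg_gen_sl[OF h1])
      with mf show "m \<in> A" by simp
    qed
  qed
  have "x \<in> A" for x
  proof -
    obtain L where L: "hl H1 L" "x = sl L" using graded_decomp[OF gH1] by blast
    have "\<forall>p\<in>set L. fst p \<in> A" using L(1) step6 unfolding hl_def by blast
    thus ?thesis using alg_gen_sl[OF h1] L(2) unfolding A_def by blast
  qed
  thus ?thesis unfolding A_def by blast
qed

end
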